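(* Let $A\in\mathbb{R}^{n\times n}$ be Metzler and Hurwitz stable, $b_0\in\mathbb{R}^n_{\ge0}$, $g_0:=-e_n^TA^{-1}b_0$, $g_n:=-e_n^TA^{-1}e_n$, $\beta>0$, and $r\in\big(g_0/(1+\beta g_n),\,g_0\big)$. For $k>0$ consider $$\dot x=Ax-x_nze_n+b_0,\qquad \dot z=-\frac{k}{\beta}z(\beta-z)(r-e_n^Tx),$$ and its equilibrium with $z^*=\dfrac{g_0-r}{g_nr}$ and $x^*=-A^{-1}(b_0-rz^*e_n)$. Then $z^*\in(0,\beta)$ and this equilibrium is locally exponentially stable for all $k>0$.
   Context: $e_i$ standard basis vectors; $x_n=e_n^Tx$. Metzler: all off-diagonal entries nonnegative. Hurwitz stable: all eigenvalues have negative real part. An equilibrium is called locally exponentially stable here if the Jacobian matrix of the vector field at the equilibrium is Hurwitz stable. *)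

theory Defs
  imports Complex_Main "Jordan_Normal_Form.Matrix" "Jordan_Normal_Form.Char_Poly"
begin

definition metzler :: "nat \<Rightarrow> real mat \<Rightarrow> bool" where
  "metzler n A \<longleftrightarrow> A \<in> carrier_mat n n \<and>
     (\<forall>i<n. \<forall>j<n. i \<noteq> j \<longrightarrow> 0 \<le> A $$ (i, j))"

definition hurwitz :: "nat \<Rightarrow> real mat \<Rightarrow> bool" where
  "hurwitz n A \<longleftrightarrow> A \<in> carrier_mat n n \<and>
     (\<forall>c. eigenvalue (map_mat complex_of_real A) c \<longrightarrow> Re c < 0)"

definition minv :: "nat \<Rightarrow> real mat \<Rightarrow> real mat" where
  "minv n A = (SOME B. B \<in> carrier_mat n n \<and> A * B = 1\<^sub>m n \<and> B * A = 1\<^sub>m n)"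

definition jacobian :: "nat \<Rightarrow> (real vec \<Rightarrow> real vec) \<Rightarrow> real vec \<Rightarrow> real mat" where
  "jacobian N F w = mat N N (\<lambda>(i, j). THE D. ((\<lambda>t. F (w + t \<cdot>\<^sub>v unit_vec N j) $ i) has_real_derivative D) (at 0))"

definition loc_exp_stable :: "nat \<Rightarrow> (real vec \<Rightarrow> real vec) \<Rightarrow> real vec \<Rightarrow> bool" where
  "loc_exp_stable N F w \<longleftrightarrow> hurwitz N (jacobian N F w)"

text \<open>The closed-loop vector field on R^(n+1), state w = (x, z) with x = first n
  coordinates and z = coordinate n (0-based). e_n is unit_vec n (n-1), x_n = x $ (n-1).\<close>
definition field :: "nat \<Rightarrow> real mat \<Rightarrow> real vec \<Rightarrow> real \<Rightarrow> real \<Rightarrow> real \<Rightarrow> real vec \<Rightarrow> real vec" where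
  "field n A b0 k \<beta> r w =
    (let x = vec_first w n; z = w $ n in
     (A *\<^sub>v x - (x $ (n - 1) * z) \<cdot>\<^sub>v unit_vec n (n - 1) + b0)
       @\<^sub>v vec 1 (\<lambda>_. - (k / \<beta>) * z * (\<beta> - z) * (r - x $ (n - 1))))"

end

theory Submission
  imports Defs "Jordan_Normal_Form.Spectral_Radius"
begin


lemma choose_s:
  fixes L :: "complex set"
  assumes fin: "finite L" and neg: "\<forall>l\<in>L. Re l < 0"
  shows "\<exists>s>(0::real). s \<ge> b \<and> (\<forall>l\<in>L. cmod (l + of_real s) < s)"
proof -
  define s where "s = 1 + \<bar>b\<bar> + (\<Sum>l\<in>L. (cmod l)^2 / (- Re l))"
  have nn: "\<And>l. l \<in> L \<Longrightarrow> 0 \<le> (cmod l)^2 / (- Re l)" using neg by (metis divide_nonneg_pos neg_0_less_iff_less zero_le_power2)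
  have ge: "\<And>l. l \<in> L \<Longrightarrow> (cmod l)^2 / (- Re l) \<le> (\<Sum>l\<in>L. (cmod l)^2 / (- Re l))"
    by (rule member_le_sum) (use nn fin in auto)
  have sn: "(\<Sum>l\<in>L. (cmod l)^2 / (- Re l)) \<ge> 0" by (rule sum_nonneg) (rule nn)
  have s0: "s > 0" unfolding s_def using sn by linarith
  have sb: "s \<ge> b" unfolding s_def using sn by linarith
  have "cmod (l + of_real s) < s" if l: "l \<in> L" for l
  proof -
    have rl: "Re l < 0" using neg l by auto
    have "(cmod l)^2 / (- Re l) < s" using ge[OF l] unfolding s_def by auto
    hence "(cmod l)^2 < s * (- Re l)" using rl by (metis neg_0_less_iff_less pos_divide_less_eq)
    moreover have "s * Re l < 0" using s0 rl by (simp add: mult_pos_neg)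
    ultimately have lt: "(cmod l)^2 + 2 * s * Re l < 0" by linarith
    have "(cmod (l + of_real s))^2 = (Re l + s)^2 + (Im l)^2"
      by (simp add: cmod_power2)
    also have "\<dots> = (cmod l)^2 + 2 * s * Re l + s^2"
      by (simp add: cmod_power2 power2_eq_square algebra_simps)
        (metis cmod_power2 power2_eq_square add.commute)
    also have "\<dots> < s^2" using lt by simp
    finally show ?thesis using s0
      using power2_less_imp_less less_imp_le by blast
  qed
  thus ?thesis using s0 sb by blast
qed

lemma choose_theta:
  fixes L :: "complex set" and s :: real
  assumes fin: "finite L" and lt: "\<forall>l\<in>L. cmod (l + of_real s) < s" and s0: "s > 0"
  shows "\<exists>\<theta>>0. \<theta> < 1 \<and> (\<forall>l\<in>L. cmod (l + of_real s) < \<theta> * s)"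
proof -
  define m where "m = Max (insert 0 ((\<lambda>l. cmod (l + of_real s) / s) ` L))"
  have fm: "finite (insert 0 ((\<lambda>l. cmod (l + of_real s) / s) ` L))" using fin by auto
  have m0: "m \<ge> 0" unfolding m_def using fm by (simp add: Max_ge_iff)
  have m1: "m < 1" unfolding m_def using fm lt s0 by (auto simp: Max_less_iff divide_less_eq)
  have ml: "cmod (l + of_real s) / s \<le> m" if "l \<in> L" for l
    unfolding m_def using fm that by (intro Max_ge) auto
  show ?thesis
  proof (intro exI[of _ "(1 + m)/2"] conjI ballI)
    show "(1+m)/2 > 0" "(1+m)/2 < 1" using m0 m1 by auto
    fix l assume l: "l \<in> L"
    have "cmod (l + of_real s) \<le> m * s" using ml[OF l] s0 by (simp add: divide_le_eq)
    also have "\<dots> < (1+m)/2 * s" using m1 s0 by (simp add: field_simps)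
    finally show "cmod (l + of_real s) < (1+m)/2 * s" .
  qed
qed



lemma pow_comm: assumes A: "(A :: 'a :: semiring_1 mat) \<in> carrier_mat n n"
  shows "A * A ^\<^sub>m k = A ^\<^sub>m k * A"
proof (induct k)
  case 0 then show ?case using A by simp
next
  case (Suc k)
  have "A * A ^\<^sub>m Suc k = (A * A ^\<^sub>m k) * A" using A by (simp add: assoc_mult_mat[symmetric, of _ n n _ n _ n])
  also have "\<dots> = A ^\<^sub>m k * A * A" using Suc by simp
  finally show ?case by simp
qed

lemma pow_Suc_index: assumes A: "(A :: 'a :: semiring_1 mat) \<in> carrier_mat n n" and "i < n" "j < n"
  shows "(A ^\<^sub>m Suc k) $$ (i,j) = (\<Sum>l<n. A $$ (i,l) * (A ^\<^sub>m k) $$ (l,j))"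
proof -
  have "A ^\<^sub>m Suc k = A * A ^\<^sub>m k" using pow_comm[OF A] by simp
  thus ?thesis using assms
    by (simp add: scalar_prod_def lessThan_atLeast0)
qed

fun pv :: "nat \<Rightarrow> real mat \<Rightarrow> real \<Rightarrow> nat \<Rightarrow> nat \<Rightarrow> real" where
  "pv n T \<theta> 0 i = 0"
| "pv n T \<theta> (Suc K) i = 1 + \<theta> * (\<Sum>l<n. T $$ (i,l) * pv n T \<theta> K l)"

lemma pv_nonneg: assumes "\<forall>i<n. \<forall>j<n. T $$ (i,j) \<ge> 0" "\<theta> \<ge> 0"
  shows "i < n \<Longrightarrow> pv n T \<theta> K i \<ge> 0"
  using assms by (induct K arbitrary: i) (auto intro!: sum_nonneg add_nonneg_nonneg mult_nonneg_nonneg)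

lemma pv_ident: assumes T: "T \<in> carrier_mat n n"
  shows "i < n \<Longrightarrow> pv n T \<theta> K i - \<theta> * (\<Sum>l<n. T $$ (i,l) * pv n T \<theta> K l)
     = 1 - \<theta>^K * (\<Sum>j<n. (T ^\<^sub>m K) $$ (i,j))"
proof (induct K arbitrary: i)
  case 0
  have "(\<Sum>j<n. (1\<^sub>m n :: real mat) $$ (i,j)) = (\<Sum>j<n. if j = i then 1 else 0)"
    using 0 by (intro sum.cong) auto
  also have "\<dots> = 1" using 0 by simp
  finally show ?case using T by simp
next
  case (Suc K)
  have IH: "\<And>l. l < n \<Longrightarrow> pv n T \<theta> K l - 1 - \<theta> * (\<Sum>m<n. T $$ (l,m) * pv n T \<theta> K m)
       = - (\<theta>^K * (\<Sum>j<n. (T ^\<^sub>m K) $$ (l,j)))" using Suc by force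
  have "pv n T \<theta> (Suc K) i - \<theta> * (\<Sum>l<n. T $$ (i,l) * pv n T \<theta> (Suc K) l)
      = 1 + \<theta> * (\<Sum>l<n. T $$ (i,l) * (pv n T \<theta> K l - 1 - \<theta> * (\<Sum>m<n. T $$ (l,m) * pv n T \<theta> K m)))"
    by (simp add: algebra_simps sum_subtractf sum_distrib_left)
  also have "\<dots> = 1 + \<theta> * (\<Sum>l<n. T $$ (i,l) * (- (\<theta>^K * (\<Sum>j<n. (T ^\<^sub>m K) $$ (l,j)))))"
    using IH by (intro arg_cong[where f="\<lambda>x. 1 + \<theta> * x"] sum.cong) auto
  also have "\<dots> = 1 - \<theta>^(Suc K) * (\<Sum>j<n. \<Sum>l<n. T $$ (i,l) * (T ^\<^sub>m K) $$ (l,j))"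
  proof -
    have "(\<Sum>l<n. T $$ (i,l) * (- (\<theta>^K * (\<Sum>j<n. (T ^\<^sub>m K) $$ (l,j)))))
        = - (\<theta>^K * (\<Sum>l<n. \<Sum>j<n. T $$ (i,l) * (T ^\<^sub>m K) $$ (l,j)))"
      by (simp add: sum_distrib_left sum_negf mult.left_commute)
    also have "(\<Sum>l<n. \<Sum>j<n. T $$ (i,l) * (T ^\<^sub>m K) $$ (l,j)) = (\<Sum>j<n. \<Sum>l<n. T $$ (i,l) * (T ^\<^sub>m K) $$ (l,j))"
      by (rule sum.swap)
    finally show ?thesis by simp
  qed
  also have "\<dots> = 1 - \<theta>^(Suc K) * (\<Sum>j<n. (T ^\<^sub>m Suc K) $$ (i,j))"
    using pow_Suc_index[OF T Suc.prems] by simp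
  finally show ?case .
qed

lemma neumann:
  fixes c :: real
  assumes T: "T \<in> carrier_mat n n" and nn: "\<forall>i<n. \<forall>j<n. T $$ (i,j) \<ge> 0"
    and th: "0 < \<theta>" "\<theta> < 1"
    and bd: "\<And>k i j. i < n \<Longrightarrow> j < n \<Longrightarrow> \<bar>(T ^\<^sub>m k) $$ (i,j)\<bar> \<le> c"
  shows "\<exists>p. (\<forall>i<n. p i \<ge> 1) \<and> (\<forall>i<n. p i - \<theta> * (\<Sum>l<n. T $$ (i,l) * p l) > 0)"
proof -
  have "real n * \<bar>c\<bar> \<ge> 0" by simp
  hence pos: "0 < 1 / (real n * \<bar>c\<bar> + 1)" by (intro divide_pos_pos) linarith+
  obtain K where K: "\<theta>^K < 1 / (real n * \<bar>c\<bar> + 1)"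
    using real_arch_pow_inv[OF pos th(2)] by blast
  define p where "p = pv n T \<theta> (Suc K)"
  show ?thesis
  proof (intro exI[of _ p] conjI allI impI)
    fix i assume i: "i < n"
    have "\<theta> * (\<Sum>l<n. T $$ (i,l) * pv n T \<theta> K l) \<ge> 0"
      using pv_nonneg[OF nn, of \<theta>] th nn i by (auto intro!: sum_nonneg mult_nonneg_nonneg)
    then show "p i \<ge> 1" unfolding p_def by simp
    have "\<bar>\<Sum>j<n. (T ^\<^sub>m Suc K) $$ (i,j)\<bar> \<le> (\<Sum>j<n. \<bar>c\<bar>)"
    proof (intro order.trans[OF sum_abs] sum_mono)
      fix j assume "j \<in> {..<n}"
      hence "\<bar>(T ^\<^sub>m Suc K) $$ (i,j)\<bar> \<le> c" using bd[OF i, of j "Suc K"] by blast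
      thus "\<bar>(T ^\<^sub>m Suc K) $$ (i,j)\<bar> \<le> \<bar>c\<bar>" by linarith
    qed
    also have "\<dots> = real n * \<bar>c\<bar>" by simp
    finally have s1: "\<bar>\<Sum>j<n. (T ^\<^sub>m Suc K) $$ (i,j)\<bar> \<le> real n * \<bar>c\<bar>" .
    have "\<theta>^(Suc K) \<le> \<theta>^K" using th by (simp add: power_le_imp_le_exp mult_le_one)
    hence tk: "\<theta>^(Suc K) < 1 / (real n * \<bar>c\<bar> + 1)" using K by linarith
    have "\<theta>^(Suc K) * (\<Sum>j<n. (T ^\<^sub>m Suc K) $$ (i,j)) \<le> \<theta>^(Suc K) * (real n * \<bar>c\<bar>)"
      using s1 th by (intro mult_left_mono) auto
    also have "\<dots> \<le> \<theta>^(Suc K) * (real n * \<bar>c\<bar> + 1)" using th by (intro mult_left_mono) auto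
    also have "\<dots> < 1"
    proof -
      have "real n * \<bar>c\<bar> \<ge> 0" by simp
      hence X: "real n * \<bar>c\<bar> + 1 > 0" by linarith
      show ?thesis using tk pos_less_divide_eq[OF X] by blast
    qed
    finally show "p i - \<theta> * (\<Sum>l<n. T $$ (i,l) * p l) > 0"
      unfolding p_def using pv_ident[OF T i, of \<theta> "Suc K"] by linarith
  qed
qed



lemma metzler_hurwitz_pos:
  assumes met: "metzler n A" and hur: "hurwitz n A" and n0: "n > 0"
  shows "\<exists>p. (\<forall>i<n. p i > 0) \<and> (\<forall>i<n. (\<Sum>l<n. A $$ (i,l) * p l) < 0)"
proof -
  have A: "A \<in> carrier_mat n n" using met unfolding metzler_def by auto
  define CA where "CA = map_mat complex_of_real A"
  have CA: "CA \<in> carrier_mat n n" unfolding CA_def using A by auto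
  define L where "L = spectrum CA"
  have finL: "finite L" unfolding L_def using card_finite_spectrum[OF CA] by auto
  have negL: "\<forall>l\<in>L. Re l < 0" using hur unfolding L_def spectrum_def hurwitz_def CA_def by auto
  obtain s where s0: "s > 0" and sb: "s \<ge> (\<Sum>i<n. \<bar>A $$ (i,i)\<bar>)" and sL: "\<forall>l\<in>L. cmod (l + of_real s) < s"
    using choose_s[OF finL negL] by blast
  obtain \<theta> where th0: "\<theta> > 0" and th1: "\<theta> < 1" and thL: "\<forall>l\<in>L. cmod (l + of_real s) < \<theta> * s"
    using choose_theta[OF finL sL s0] by blast
  have sdiag: "A $$ (i,i) + s \<ge> 0" if "i < n" for i
  proof -
    have "\<bar>A $$ (i,i)\<bar> \<le> (\<Sum>i<n. \<bar>A $$ (i,i)\<bar>)"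
      by (rule member_le_sum) (use that in auto)
    thus ?thesis using sb by linarith
  qed
  define T where "T = mat n n (\<lambda>(i,j). (A $$ (i,j) + (if i = j then s else 0)) / (\<theta> * s))"
  have T: "T \<in> carrier_mat n n" unfolding T_def by auto
  have Tnn: "\<forall>i<n. \<forall>j<n. T $$ (i,j) \<ge> 0"
    using met sdiag s0 th0 unfolding T_def metzler_def by auto
  define U where "U = map_mat complex_of_real T"
  have U: "U \<in> carrier_mat n n" unfolding U_def using T by auto
  have evU: "cmod \<mu> < 1" if ev: "eigenvalue U \<mu>" for \<mu>
  proof -
    obtain v where v: "v \<in> carrier_vec n" "v \<noteq> 0\<^sub>v n" "U *\<^sub>v v = \<mu> \<cdot>\<^sub>v v"
      using ev U unfolding eigenvalue_def eigenvector_def by auto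
    have "CA *\<^sub>v v = (of_real (\<theta> * s) * \<mu> - of_real s) \<cdot>\<^sub>v v"
    proof (rule eq_vecI)
      fix i assume i: "i < dim_vec ((of_real (\<theta> * s) * \<mu> - of_real s) \<cdot>\<^sub>v v)"
      hence i: "i < n" using v by auto
      have "\<mu> * v $ i = (U *\<^sub>v v) $ i" by (subst v(3)) (use i v(1) in auto)
      also have "\<dots> = (\<Sum>j<n. of_real ((A $$ (i,j) + (if i = j then s else 0)) / (\<theta> * s)) * v $ j)"
        using i v(1) unfolding U_def T_def by (auto simp: scalar_prod_def lessThan_atLeast0 intro!: sum.cong)
      also have "\<dots> = (\<Sum>j<n. of_real (A $$ (i,j)) * v $ j + (if j = i then of_real s * v $ j else 0)) / of_real (\<theta> * s)"
        unfolding sum_divide_distrib by (intro sum.cong) (auto simp: field_simps)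
      also have "\<dots> = ((CA *\<^sub>v v) $ i + of_real s * v $ i) / of_real (\<theta> * s)"
      proof -
        have "(CA *\<^sub>v v) $ i = (\<Sum>j<n. of_real (A $$ (i,j)) * v $ j)"
          using i v(1) A unfolding CA_def by (auto simp: scalar_prod_def lessThan_atLeast0 intro!: sum.cong)
        thus ?thesis using i by (simp add: sum.distrib)
      qed
      finally have "\<mu> * v $ i = ((CA *\<^sub>v v) $ i + of_real s * v $ i) / of_real (\<theta> * s)" .
      hence "(CA *\<^sub>v v) $ i = of_real (\<theta> * s) * \<mu> * v $ i - of_real s * v $ i"
        using s0 th0 by (simp add: field_simps)
      thus "(CA *\<^sub>v v) $ i = ((of_real (\<theta> * s) * \<mu> - of_real s) \<cdot>\<^sub>v v) $ i"
        using i v by (simp add: algebra_simps)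
    qed (use v CA in auto)
    hence "of_real (\<theta> * s) * \<mu> - of_real s \<in> L"
      unfolding L_def spectrum_def eigenvalue_def eigenvector_def using v CA by auto
    hence "cmod (of_real (\<theta> * s) * \<mu>) < \<theta> * s" using thL by force
    hence "\<theta> * s * cmod \<mu> < \<theta> * s * 1" using s0 th0 by (simp add: norm_mult)
    thus ?thesis using s0 th0 by (simp add: mult_less_cancel_left_pos)
  qed
  have "spectral_radius U < 1"
    using spectral_radius_mem_max(1)[OF U n0] evU unfolding spectrum_def by auto
  then obtain c where c: "\<And>k. norm_bound (U ^\<^sub>m k) c"
    using spectral_radius_jnf_norm_bound_less_1_upper_triangular[OF U] by blast
  have bd: "\<bar>(T ^\<^sub>m k) $$ (i,j)\<bar> \<le> c" if "i < n" "j < n" for k i j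
  proof -
    have "U ^\<^sub>m k = map_mat complex_of_real (T ^\<^sub>m k)"
      unfolding U_def using of_real_hom.mat_hom_pow[OF T] by metis
    hence "norm ((map_mat complex_of_real (T ^\<^sub>m k)) $$ (i,j)) \<le> c"
      using c[of k] that U unfolding norm_bound_def by (metis pow_carrier_mat carrier_matD)
    thus ?thesis using that T by simp
  qed
  obtain p where p1: "\<forall>i<n. p i \<ge> 1" and p2: "\<forall>i<n. p i - \<theta> * (\<Sum>l<n. T $$ (i,l) * p l) > 0"
    using neumann[OF T Tnn th0 th1 bd] by blast
  show ?thesis
  proof (intro exI[of _ p] conjI allI impI)
    fix i assume i: "i < n"
    show "p i > 0" using p1 i by force
    have "\<theta> * (\<Sum>l<n. T $$ (i,l) * p l) = (\<Sum>l<n. A $$ (i,l) * p l + (if l = i then s * p l else 0)) / s"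
      using i s0 th0 unfolding T_def sum_distrib_left sum_divide_distrib by (intro sum.cong) (auto simp: field_simps)
    also have "\<dots> = (\<Sum>l<n. A $$ (i,l) * p l) / s + p i"
      using i s0 by (simp add: sum.distrib add_divide_distrib)
    finally have eq: "\<theta> * (\<Sum>l<n. T $$ (i,l) * p l) = (\<Sum>l<n. A $$ (i,l) * p l) / s + p i" .
    have "\<theta> * (\<Sum>l<n. T $$ (i,l) * p l) < p i" using p2 i by force
    hence "(\<Sum>l<n. A $$ (i,l) * p l) / s < 0" using eq by linarith
    thus "(\<Sum>l<n. A $$ (i,l) * p l) < 0" using s0 by (simp add: divide_less_0_iff)
  qed
qed



lemma re_cnj_le: "Re (cnj a * b) \<le> ((cmod a)^2 + (cmod b)^2) / 2"
proof -
  have "Re (cnj a * b) = Re a * Re b + Im a * Im b" by simp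
  moreover have "(cmod a)^2 = (Re a)^2 + (Im a)^2" "(cmod b)^2 = (Re b)^2 + (Im b)^2"
    by (simp_all add: cmod_power2)
  moreover have "0 \<le> (Re a - Re b)^2 + (Im a - Im b)^2" by simp
  ultimately show ?thesis by (simp add: power2_eq_square algebra_simps)
qed

lemma lyap:
  fixes B :: "nat \<Rightarrow> nat \<Rightarrow> real" and p q :: "nat \<Rightarrow> real" and x :: "nat \<Rightarrow> complex"
  assumes off: "\<forall>i<n. \<forall>j<n. i \<noteq> j \<longrightarrow> B i j \<ge> 0"
    and pp: "\<forall>i<n. p i > 0" and qp: "\<forall>i<n. q i > 0"
    and rn: "\<forall>i<n. (\<Sum>j<n. B i j * p j) < 0"
    and cn: "\<forall>j<n. (\<Sum>i<n. q i * B i j) < 0"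
    and nz: "\<exists>i<n. x i \<noteq> 0"
  shows "Re (\<Sum>i<n. \<Sum>j<n. cnj (x i) * of_real (q i / p i * B i j) * x j) < 0"
proof -
  define y where "y i = x i / of_real (p i)" for i
  have xy: "x i = of_real (p i) * y i" if "i < n" for i using pp that unfolding y_def by auto
  define h where "h i j = q i * B i j * p j * (((cmod (y i))^2 + (cmod (y j))^2) / 2)" for i j
  have le: "Re (cnj (x i) * of_real (q i / p i * B i j) * x j) \<le> h i j" if "i < n" "j < n" for i j
  proof -
    have "cnj (x i) * of_real (q i / p i * B i j) * x j = of_real (q i * B i j * p j) * (cnj (y i) * y j)"
    proof -
      have "p i \<noteq> 0" using pp that by auto
      thus ?thesis using xy[OF that(1)] xy[OF that(2)] by (simp add: field_simps)
    qed
    hence e: "Re (cnj (x i) * of_real (q i / p i * B i j) * x j) = q i * B i j * p j * Re (cnj (y i) * y j)"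
      by simp
    show ?thesis
    proof (cases "i = j")
      case True
      have "Re (cnj (y i) * y i) = (cmod (y i))^2" using cmod_power2[of "y i"] by (simp add: power2_eq_square)
      then show ?thesis unfolding e h_def using True by simp
    next
      case False
      have "q i * B i j * p j \<ge> 0" using off pp qp that False by (simp add: less_imp_le)
      then show ?thesis unfolding e h_def by (intro mult_left_mono re_cnj_le)
    qed
  qed
  have "Re (\<Sum>i<n. \<Sum>j<n. cnj (x i) * of_real (q i / p i * B i j) * x j)
     = (\<Sum>i<n. \<Sum>j<n. Re (cnj (x i) * of_real (q i / p i * B i j) * x j))" by (simp add: Re_sum)
  also have "\<dots> \<le> (\<Sum>i<n. \<Sum>j<n. h i j)" using le by (intro sum_mono) auto
  also have "(\<Sum>i<n. \<Sum>j<n. h i j) = (\<Sum>i<n. (cmod (y i))^2 * q i * (\<Sum>j<n. B i j * p j)) / 2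
       + (\<Sum>j<n. (cmod (y j))^2 * p j * (\<Sum>i<n. q i * B i j)) / 2"
  proof -
    have "(\<Sum>i<n. \<Sum>j<n. h i j) = (\<Sum>i<n. \<Sum>j<n. (cmod (y i))^2 * q i * (B i j * p j)) / 2
       + (\<Sum>i<n. \<Sum>j<n. (cmod (y j))^2 * p j * (q i * B i j)) / 2"
    proof -
      have hs: "h i j = (cmod (y i))^2 * q i * (B i j * p j) / 2 + (cmod (y j))^2 * p j * (q i * B i j) / 2" for i j
        unfolding h_def by (simp add: algebra_simps add_divide_distrib)
      show ?thesis unfolding hs sum.distrib by (simp only: sum_divide_distrib)
    qed
    also have "(\<Sum>i<n. \<Sum>j<n. (cmod (y j))^2 * p j * (q i * B i j)) = (\<Sum>j<n. \<Sum>i<n. (cmod (y j))^2 * p j * (q i * B i j))"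
      by (rule sum.swap)
    finally show ?thesis by (simp add: sum_distrib_left)
  qed
  also have "\<dots> < 0"
  proof -
    obtain k where k: "k < n" "x k \<noteq> 0" using nz by blast
    have yk: "y k \<noteq> 0" using xy[OF k(1)] k by auto
    have t1: "(\<Sum>i<n. (cmod (y i))^2 * q i * (\<Sum>j<n. B i j * p j)) < (\<Sum>i<n. 0)"
    proof (rule sum_strict_mono_ex1)
      show "finite {..<n}" by simp
      show "\<forall>i\<in>{..<n}. (cmod (y i))^2 * q i * (\<Sum>j<n. B i j * p j) \<le> 0"
      proof
        fix i assume "i \<in> {..<n}"
        hence "(cmod (y i))^2 * q i \<ge> 0" "(\<Sum>j<n. B i j * p j) \<le> 0" using qp rn by (auto intro: less_imp_le)
        thus "(cmod (y i))^2 * q i * (\<Sum>j<n. B i j * p j) \<le> 0" by (rule mult_nonneg_nonpos)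
      qed
      show "\<exists>i\<in>{..<n}. (cmod (y i))^2 * q i * (\<Sum>j<n. B i j * p j) < 0"
      proof (intro bexI[of _ k])
        have "(cmod (y k))^2 * q k > 0" "(\<Sum>j<n. B k j * p j) < 0" using qp rn k yk by auto
        thus "(cmod (y k))^2 * q k * (\<Sum>j<n. B k j * p j) < 0" by (rule mult_pos_neg)
      qed (use k in auto)
    qed
    have t2: "(\<Sum>j<n. (cmod (y j))^2 * p j * (\<Sum>i<n. q i * B i j)) \<le> 0"
    proof (rule sum_nonpos)
      fix j assume "j \<in> {..<n}"
      hence "(cmod (y j))^2 * p j \<ge> 0" "(\<Sum>i<n. q i * B i j) \<le> 0" using pp cn by (auto intro: less_imp_le)
      thus "(cmod (y j))^2 * p j * (\<Sum>i<n. q i * B i j) \<le> 0" by (rule mult_nonneg_nonpos)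
    qed
    show ?thesis using t1 t2 by simp
  qed
  finally show ?thesis .
qed



definition Jf :: "nat \<Rightarrow> real mat \<Rightarrow> real \<Rightarrow> real \<Rightarrow> real \<Rightarrow> nat \<Rightarrow> nat \<Rightarrow> real" where
  "Jf n A zs r \<kappa> i j = (if i < n then (if j < n then A $$ (i,j) - (if i = n - 1 \<and> j = n - 1 then zs else 0)
        else (if i = n - 1 then - r else 0)) else (if j = n - 1 then \<kappa> else 0))"

lemma jac_hurwitz:
  assumes met: "metzler n A" and n0: "n > 0"
    and pp: "\<forall>i<n. p i > 0" and qp: "\<forall>i<n. q i > 0"
    and rn: "\<forall>i<n. (\<Sum>j<n. A $$ (i,j) * p j) < 0"
    and cn: "\<forall>j<n. (\<Sum>i<n. q i * A $$ (i,j)) < 0"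
    and zs: "zs \<ge> 0" and r: "r > 0" and ka: "\<kappa> > 0"
  shows "hurwitz (Suc n) (mat (Suc n) (Suc n) (\<lambda>(i,j). Jf n A zs r \<kappa> i j))"
proof -
  let ?m = "n - 1"
  have m: "?m < n" using n0 by auto
  define J where "J = mat (Suc n) (Suc n) (\<lambda>(i,j). Jf n A zs r \<kappa> i j)"
  define A' where "A' i j = A $$ (i,j) - (if i = ?m \<and> j = ?m then zs else 0)" for i j
  have off: "\<forall>i<n. \<forall>j<n. i \<noteq> j \<longrightarrow> A' i j \<ge> 0" using met unfolding metzler_def A'_def by auto
  have rn': "\<forall>i<n. (\<Sum>j<n. A' i j * p j) < 0"
  proof (intro allI impI)
    fix i assume i: "i < n"
    have "(\<Sum>j<n. A' i j * p j) = (\<Sum>j<n. A $$ (i,j) * p j) - (\<Sum>j<n. (if i = ?m \<and> j = ?m then zs * p j else 0))"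
      unfolding A'_def sum_subtractf[symmetric] by (intro sum.cong) (auto simp: algebra_simps)
    also have "(\<Sum>j<n. (if i = ?m \<and> j = ?m then zs * p j else 0)) \<ge> 0"
      using zs pp by (intro sum_nonneg) auto
    ultimately show "(\<Sum>j<n. A' i j * p j) < 0" using rn i by force
  qed
  have cn': "\<forall>j<n. (\<Sum>i<n. q i * A' i j) < 0"
  proof (intro allI impI)
    fix j assume j: "j < n"
    have "(\<Sum>i<n. q i * A' i j) = (\<Sum>i<n. q i * A $$ (i,j)) - (\<Sum>i<n. (if i = ?m \<and> j = ?m then q i * zs else 0))"
      unfolding A'_def sum_subtractf[symmetric] by (intro sum.cong) (auto simp: algebra_simps)
    also have "(\<Sum>i<n. (if i = ?m \<and> j = ?m then q i * zs else 0)) \<ge> 0"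
      using zs qp by (intro sum_nonneg) auto
    ultimately show "(\<Sum>i<n. q i * A' i j) < 0" using cn j by force
  qed
  define P where "P i = q i / p i" for i
  have Pp: "P i > 0" if "i < n" for i using pp qp that unfolding P_def by auto
  have "Re \<mu> < 0" if ev: "eigenvalue (map_mat complex_of_real J) \<mu>" for \<mu>
  proof -
    let ?CJ = "map_mat complex_of_real J"
    obtain v where v: "v \<in> carrier_vec (Suc n)" "v \<noteq> 0\<^sub>v (Suc n)" "?CJ *\<^sub>v v = \<mu> \<cdot>\<^sub>v v"
      using ev unfolding eigenvalue_def eigenvector_def J_def by auto
    have row: "(\<Sum>j<Suc n. of_real (Jf n A zs r \<kappa> i j) * v $ j) = \<mu> * v $ i" if "i < Suc n" for i
    proof -
      have "\<mu> * v $ i = (?CJ *\<^sub>v v) $ i" by (subst v(3)) (use that v(1) in auto)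
      also have "\<dots> = (\<Sum>j<Suc n. of_real (Jf n A zs r \<kappa> i j) * v $ j)"
        using that v(1) unfolding J_def by (auto simp: scalar_prod_def lessThan_atLeast0 intro!: sum.cong)
      finally show ?thesis by simp
    qed
    have rowx: "(\<Sum>j<n. of_real (A' i j) * v $ j) - (if i = ?m then of_real r * v $ n else 0) = \<mu> * v $ i"
      if i: "i < n" for i
    proof -
      have "(\<Sum>j<Suc n. of_real (Jf n A zs r \<kappa> i j) * v $ j)
          = (\<Sum>j<n. of_real (Jf n A zs r \<kappa> i j) * v $ j) + of_real (Jf n A zs r \<kappa> i n) * v $ n"
        by simp
      also have "(\<Sum>j<n. of_real (Jf n A zs r \<kappa> i j) * v $ j) = (\<Sum>j<n. of_real (A' i j) * v $ j)"
        by (intro sum.cong) (auto simp: Jf_def A'_def i)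
      finally have eqf: "(\<Sum>j<Suc n. of_real (Jf n A zs r \<kappa> i j) * v $ j)
          = (\<Sum>j<n. of_real (A' i j) * v $ j) + of_real (Jf n A zs r \<kappa> i n) * v $ n" .
      have jn: "of_real (Jf n A zs r \<kappa> i n) * v $ n = - (if i = ?m then of_real r * v $ n else 0)"
        using i by (simp add: Jf_def)
      have "(\<Sum>j<n. of_real (A' i j) * v $ j) + of_real (Jf n A zs r \<kappa> i n) * v $ n = \<mu> * v $ i"
        using row[of i] eqf i by (metis less_SucI)
      thus ?thesis unfolding jn by (simp add: algebra_simps)
    qed
    have rown: "of_real \<kappa> * v $ ?m = \<mu> * v $ n"
    proof -
      have "(\<Sum>j<Suc n. of_real (Jf n A zs r \<kappa> n j) * v $ j) = (\<Sum>j<Suc n. if j = ?m then of_real \<kappa> * v $ j else 0)"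
        by (intro sum.cong) (auto simp: Jf_def)
      also have "\<dots> = of_real \<kappa> * v $ ?m" using m by simp
      finally show ?thesis using row[of n] by simp
    qed
    have nzx: "\<exists>i<n. v $ i \<noteq> 0"
    proof (rule ccontr)
      assume "\<not> ?thesis"
      hence z: "\<forall>i<n. v $ i = 0" by auto
      have "(\<Sum>j<n. of_real (A' ?m j) * v $ j) = 0" using z by simp
      hence "- (of_real r * v $ n) = \<mu> * v $ ?m" using rowx[OF m] by simp
      hence "v $ n = 0" using z m r by simp
      hence "v = 0\<^sub>v (Suc n)" using z v(1) by (intro eq_vecI) (auto simp: less_Suc_eq)
      thus False using v(2) by simp
    qed
    define S where "S = (\<Sum>i<n. \<Sum>j<n. cnj (v $ i) * of_real (q i / p i * A' i j) * v $ j)"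
    have ReS: "Re S < 0" unfolding S_def by (rule lyap[OF off pp qp rn' cn' nzx])
    define \<alpha> where "\<alpha> = r * P ?m / \<kappa>"
    have al: "\<alpha> > 0" unfolding \<alpha>_def using Pp[OF m] r ka by auto
    define D where "D = (\<Sum>i<n. P i * (cmod (v $ i))^2) + \<alpha> * (cmod (v $ n))^2"
    have Pp': "P i \<ge> 0" if "i < n" for i using Pp[OF that] by simp
    have D0: "D \<ge> 0" unfolding D_def using Pp' al by (intro add_nonneg_nonneg sum_nonneg mult_nonneg_nonneg) auto
    have e1: "(\<Sum>i<n. cnj (v $ i) * of_real (P i) * (\<mu> * v $ i))
        = S - of_real (r * P ?m) * (cnj (v $ ?m) * v $ n)"
    proof -
      have "(\<Sum>i<n. cnj (v $ i) * of_real (P i) * (\<mu> * v $ i))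
          = (\<Sum>i<n. cnj (v $ i) * of_real (P i) * ((\<Sum>j<n. of_real (A' i j) * v $ j) - (if i = ?m then of_real r * v $ n else 0)))"
        using rowx by (intro sum.cong) auto
      also have "\<dots> = (\<Sum>i<n. \<Sum>j<n. cnj (v $ i) * of_real (q i / p i * A' i j) * v $ j)
            - (\<Sum>i<n. if i = ?m then cnj (v $ i) * of_real (P i) * (of_real r * v $ n) else 0)"
        unfolding sum_subtractf[symmetric]
      proof (intro sum.cong refl)
        fix i assume "i \<in> {..<n}"
        have "cnj (v $ i) * of_real (P i) * (\<Sum>j<n. of_real (A' i j) * v $ j)
            = (\<Sum>j<n. cnj (v $ i) * of_real (q i / p i * A' i j) * v $ j)"
          unfolding P_def sum_distrib_left by (intro sum.cong) (auto simp: algebra_simps)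
        thus "cnj (v $ i) * of_real (P i) * ((\<Sum>j<n. of_real (A' i j) * v $ j) - (if i = ?m then of_real r * v $ n else 0))
          = (\<Sum>j<n. cnj (v $ i) * of_real (q i / p i * A' i j) * v $ j)
            - (if i = ?m then cnj (v $ i) * of_real (P i) * (of_real r * v $ n) else 0)"
          by (simp add: right_diff_distrib)
      qed
      also have "(\<Sum>i<n. if i = ?m then cnj (v $ i) * of_real (P i) * (of_real r * v $ n) else 0)
          = of_real (r * P ?m) * (cnj (v $ ?m) * v $ n)" using m by (simp add: algebra_simps)
      finally show ?thesis unfolding S_def .
    qed
    have e2: "cnj (v $ n) * of_real \<alpha> * (\<mu> * v $ n) = of_real (r * P ?m) * (cnj (v $ n) * v $ ?m)"
      using rown[symmetric] ka unfolding \<alpha>_def by (simp add: field_simps)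
    have "\<mu> * of_real D = (\<Sum>i<n. cnj (v $ i) * of_real (P i) * (\<mu> * v $ i)) + cnj (v $ n) * of_real \<alpha> * (\<mu> * v $ n)"
    proof -
      have cs: "\<And>z. complex_of_real ((cmod z)^2) = cnj z * z"
        by (metis complex_norm_square mult.commute of_real_power)
      show ?thesis unfolding D_def of_real_add of_real_sum of_real_mult cs
        by (simp add: sum_distrib_left distrib_left algebra_simps)
    qed
    also have "\<dots> = S + of_real (r * P ?m) * (cnj (v $ n) * v $ ?m - cnj (v $ ?m) * v $ n)"
      unfolding e1 e2 by (simp add: algebra_simps)
    finally have "Re (\<mu> * of_real D) = Re S + (r * P ?m) * Re (cnj (v $ n) * v $ ?m - cnj (v $ ?m) * v $ n)"
      by simp
    also have "Re (cnj (v $ n) * v $ ?m - cnj (v $ ?m) * v $ n) = 0" by simp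
    finally have "Re \<mu> * D < 0" using ReS by simp
    thus "Re \<mu> < 0" using D0 by (meson mult_nonneg_nonneg not_less)
  qed
  thus ?thesis unfolding hurwitz_def J_def by auto
qed



lemma hurwitz_transpose: assumes "hurwitz n A" shows "hurwitz n (transpose_mat A)"
proof -
  have A: "A \<in> carrier_mat n n" using assms unfolding hurwitz_def by auto
  have CA: "map_mat complex_of_real A \<in> carrier_mat n n" using A by auto
  have "eigenvalue (map_mat complex_of_real (transpose_mat A)) c \<longleftrightarrow> eigenvalue (map_mat complex_of_real A) c" for c
  proof -
    have e: "map_mat complex_of_real (transpose_mat A) = transpose_mat (map_mat complex_of_real A)"
      by (simp add: map_mat_transpose)
    have CT: "transpose_mat (map_mat complex_of_real A) \<in> carrier_mat n n" using CA by auto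
    show ?thesis unfolding e eigenvalue_root_char_poly[OF CA]
      eigenvalue_root_char_poly[OF CT] char_poly_transpose_mat[OF CA] ..
  qed
  thus ?thesis using assms A unfolding hurwitz_def by auto
qed

lemma metzler_transpose: assumes "metzler n A" shows "metzler n (transpose_mat A)"
  using assms unfolding metzler_def by auto

lemma quad_real:
  assumes A: "A \<in> carrier_mat n n" and u: "u \<in> carrier_vec n"
  shows "(\<Sum>i<n. \<Sum>j<n. cnj (complex_of_real (u $ i)) * complex_of_real (f i * A $$ (i,j)) * complex_of_real (u $ j))
    = complex_of_real (\<Sum>i<n. u $ i * f i * (A *\<^sub>v u) $ i)"
proof -
  have "(A *\<^sub>v u) $ i = (\<Sum>j<n. A $$ (i,j) * u $ j)" if "i < n" for i
    using A u that by (auto simp: scalar_prod_def lessThan_atLeast0 intro!: sum.cong)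
  thus ?thesis by (simp add: sum_distrib_left algebra_simps)
qed

lemma field_eval:
  assumes A: "A \<in> carrier_mat n n" and b0: "b0 \<in> carrier_vec n" and n0: "n > 0"
    and w: "w \<in> carrier_vec (Suc n)"
  shows "dim_vec (field n A b0 k \<beta> r w) = Suc n"
    and "i < n \<Longrightarrow> field n A b0 k \<beta> r w $ i = (\<Sum>l<n. A $$ (i,l) * w $ l)
          - (if i = n - 1 then w $ (n - 1) * w $ n else 0) + b0 $ i"
    and "field n A b0 k \<beta> r w $ n = - (k / \<beta>) * w $ n * (\<beta> - w $ n) * (r - w $ (n - 1))"
proof -
  let ?x = "vec_first w n"
  have x: "?x \<in> carrier_vec n" by simp
  have xi: "?x $ l = w $ l" if "l < n" for l using that unfolding vec_first_def by simp
  show "dim_vec (field n A b0 k \<beta> r w) = Suc n" using A b0 unfolding field_def Let_def by simp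
  show "i < n \<Longrightarrow> field n A b0 k \<beta> r w $ i = (\<Sum>l<n. A $$ (i,l) * w $ l)
          - (if i = n - 1 then w $ (n - 1) * w $ n else 0) + b0 $ i"
  proof -
    assume i: "i < n"
    have "(A *\<^sub>v ?x) $ i = (\<Sum>l<n. A $$ (i,l) * w $ l)"
      using A i xi by (auto simp: scalar_prod_def lessThan_atLeast0 intro!: sum.cong)
    moreover have "?x $ (n - 1) = w $ (n - 1)" using xi n0 by simp
    ultimately show ?thesis using A b0 i n0 unfolding field_def Let_def
      by (simp add: index_append_vec)
  qed
  show "field n A b0 k \<beta> r w $ n = - (k / \<beta>) * w $ n * (\<beta> - w $ n) * (r - w $ (n - 1))"
  proof -
    have "?x $ (n - 1) = w $ (n - 1)" using xi n0 by simp
    thus ?thesis using A b0 n0 unfolding field_def Let_def by (simp add: index_append_vec)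
  qed
qed

lemma d1: "((\<lambda>t::real. a + t*b - c*((u1 + t*d1)*(u2+t*d2))) has_real_derivative (b - c*(d1*u2 + u1*d2))) (at 0)"
  by (auto intro!: derivative_eq_intros simp: algebra_simps)

lemma d2: "((\<lambda>t::real. K * (z + t*dz) * (\<beta> - (z + t*dz)) * (r - (r + t*dx))) has_real_derivative (-(K*z*(\<beta> - z)*dx))) (at 0)"
  by (auto intro!: derivative_eq_intros simp: algebra_simps)

lemma jac_eq:
  assumes A: "A \<in> carrier_mat n n" and b0: "b0 \<in> carrier_vec n" and n0: "n > 0"
    and xs: "xs \<in> carrier_vec n" and xr: "xs $ (n - 1) = r"
  shows "jacobian (Suc n) (field n A b0 k \<beta> r) (xs @\<^sub>v vec 1 (\<lambda>_. zs))
     = mat (Suc n) (Suc n) (\<lambda>(i,j). Jf n A zs r (k / \<beta> * zs * (\<beta> - zs)) i j)"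
proof -
  let ?m = "n - 1"
  have m: "?m < n" using n0 by simp
  define w where "w = xs @\<^sub>v vec 1 (\<lambda>_. zs)"
  have dw: "dim_vec w = Suc n" unfolding w_def using xs by simp
  have wc: "w \<in> carrier_vec (Suc n)" by (rule carrier_vecI[OF dw])
  have wl: "w $ l = xs $ l" if "l < n" for l unfolding w_def using xs that by (simp add: index_append_vec)
  have wn: "w $ n = zs" unfolding w_def using xs by (simp add: index_append_vec)
  have wm: "w $ ?m = r" using wl[OF m] xr by simp
  define \<kappa> where "\<kappa> = k / \<beta> * zs * (\<beta> - zs)"
  have der: "((\<lambda>t. field n A b0 k \<beta> r (w + t \<cdot>\<^sub>v unit_vec (Suc n) j) $ i) has_real_derivative Jf n A zs r \<kappa> i j) (at 0)"
    if i: "i < Suc n" and j: "j < Suc n" for i j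
  proof -
    define d where "d l = (if l = j then 1 else 0 :: real)" for l
    have wt: "w + t \<cdot>\<^sub>v unit_vec (Suc n) j \<in> carrier_vec (Suc n)" for t using wc by auto
    have wti: "(w + t \<cdot>\<^sub>v unit_vec (Suc n) j) $ l = w $ l + t * d l" if "l < Suc n" for t l
      using wc that j unfolding d_def by auto
    show ?thesis
    proof (cases "i < n")
      case True
      define c where "c = (if i = ?m then 1 else 0 :: real)"
      have feq: "(\<lambda>t. field n A b0 k \<beta> r (w + t \<cdot>\<^sub>v unit_vec (Suc n) j) $ i)
        = (\<lambda>t. ((\<Sum>l<n. A $$ (i,l) * w $ l) + b0 $ i) + t * (\<Sum>l<n. A $$ (i,l) * d l)
              - c * ((w $ ?m + t * d ?m) * (w $ n + t * d n)))"
      proof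
        fix t
        have s: "(\<Sum>l<n. A $$ (i,l) * (w + t \<cdot>\<^sub>v unit_vec (Suc n) j) $ l) = (\<Sum>l<n. A $$ (i,l) * w $ l) + t * (\<Sum>l<n. A $$ (i,l) * d l)"
        proof -
          have "(\<Sum>l<n. A $$ (i,l) * (w + t \<cdot>\<^sub>v unit_vec (Suc n) j) $ l) = (\<Sum>l<n. A $$ (i,l) * w $ l + t * (A $$ (i,l) * d l))"
          proof (intro sum.cong refl)
            fix l assume "l \<in> {..<n}"
            hence "l < Suc n" by simp
            thus "A $$ (i,l) * (w + t \<cdot>\<^sub>v unit_vec (Suc n) j) $ l = A $$ (i,l) * w $ l + t * (A $$ (i,l) * d l)"
              using wti by (simp add: algebra_simps)
          qed
          thus ?thesis by (simp add: sum.distrib sum_distrib_left)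
        qed
        show "field n A b0 k \<beta> r (w + t \<cdot>\<^sub>v unit_vec (Suc n) j) $ i = ((\<Sum>l<n. A $$ (i,l) * w $ l) + b0 $ i) + t * (\<Sum>l<n. A $$ (i,l) * d l)
              - c * ((w $ ?m + t * d ?m) * (w $ n + t * d n))"
          unfolding field_eval(2)[OF A b0 n0 wt True] s c_def using wti[of ?m t] wti[of n t] m by auto
      qed
      have val: "(\<Sum>l<n. A $$ (i,l) * d l) - c * (d ?m * w $ n + w $ ?m * d n) = Jf n A zs r \<kappa> i j"
      proof (cases "j < n")
        case jn: True
        have "(\<Sum>l<n. A $$ (i,l) * d l) = A $$ (i,j)" unfolding d_def using jn by (simp add: if_distrib cong: if_cong)
        thus ?thesis using jn True unfolding Jf_def c_def d_def wn by auto
      next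
        case False
        hence jn: "j = n" using j by simp
        have "(\<Sum>l<n. A $$ (i,l) * d l) = 0" unfolding d_def using jn by simp
        thus ?thesis using jn True m unfolding Jf_def c_def d_def wm by auto
      qed
      show ?thesis unfolding feq using d1[of "(\<Sum>l<n. A $$ (i,l) * w $ l) + b0 $ i" "\<Sum>l<n. A $$ (i,l) * d l" c "w $ ?m" "d ?m" "w $ n" "d n"]
        unfolding val .
    next
      case False
      hence iN: "i = n" using i by simp
      have feq: "(\<lambda>t. field n A b0 k \<beta> r (w + t \<cdot>\<^sub>v unit_vec (Suc n) j) $ i)
        = (\<lambda>t. (- (k / \<beta>)) * (zs + t * d n) * (\<beta> - (zs + t * d n)) * (r - (r + t * d ?m)))"
      proof
        fix t
        show "field n A b0 k \<beta> r (w + t \<cdot>\<^sub>v unit_vec (Suc n) j) $ i = (- (k / \<beta>)) * (zs + t * d n) * (\<beta> - (zs + t * d n)) * (r - (r + t * d ?m))"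
          unfolding iN field_eval(3)[OF A b0 n0 wt] using wti[of ?m t] wti[of n t] m wn wm by auto
      qed
      have val: "- ((- (k / \<beta>)) * zs * (\<beta> - zs) * d ?m) = Jf n A zs r \<kappa> i j"
        unfolding Jf_def d_def \<kappa>_def using iN by auto
      show ?thesis unfolding feq using d2[of "- (k / \<beta>)" zs "d n" \<beta> r "d ?m"] unfolding val .
    qed
  qed
  show ?thesis unfolding w_def[symmetric] jacobian_def \<kappa>_def[symmetric]
  proof (rule eq_matI)
    fix i j assume i: "i < dim_row (mat (Suc n) (Suc n) (\<lambda>(i,j). Jf n A zs r \<kappa> i j))"
      and j: "j < dim_col (mat (Suc n) (Suc n) (\<lambda>(i,j). Jf n A zs r \<kappa> i j))"
    hence i: "i < Suc n" and j: "j < Suc n" by auto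
    have "(THE D. ((\<lambda>t. field n A b0 k \<beta> r (w + t \<cdot>\<^sub>v unit_vec (Suc n) j) $ i) has_real_derivative D) (at 0))
        = Jf n A zs r \<kappa> i j"
    proof (rule the_equality)
      show "((\<lambda>t. field n A b0 k \<beta> r (w + t \<cdot>\<^sub>v unit_vec (Suc n) j) $ i) has_real_derivative Jf n A zs r \<kappa> i j) (at 0)"
        by (rule der[OF i j])
      fix D assume "((\<lambda>t. field n A b0 k \<beta> r (w + t \<cdot>\<^sub>v unit_vec (Suc n) j) $ i) has_real_derivative D) (at 0)"
      thus "D = Jf n A zs r \<kappa> i j" using der[OF i j] by (rule DERIV_unique)
    qed
    thus "mat (Suc n) (Suc n) (\<lambda>(i, j). THE D. ((\<lambda>t. field n A b0 k \<beta> r (w + t \<cdot>\<^sub>v unit_vec (Suc n) j) $ i) has_real_derivative D) (at 0)) $$ (i, j) =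
         mat (Suc n) (Suc n) (\<lambda>(i,j). Jf n A zs r \<kappa> i j) $$ (i, j)" using i j by simp
  qed auto
qed

theorem mainTheorem19:
  fixes n :: nat and A :: "real mat" and b0 :: "real vec" and \<beta> r g0 gn zs :: real and xs :: "real vec"
  assumes "n \<ge> 1"
    and "metzler n A" and "hurwitz n A"
    and "b0 \<in> carrier_vec n" and "\<forall>i<n. 0 \<le> b0 $ i"
    and "\<beta> > 0"
    and "g0 = - (minv n A *\<^sub>v b0) $ (n - 1)"
    and "gn = - (minv n A *\<^sub>v unit_vec n (n - 1)) $ (n - 1)"
    and "g0 / (1 + \<beta> * gn) < r" and "r < g0"
    and "zs = (g0 - r) / (gn * r)"
    and "xs = - (minv n A *\<^sub>v (b0 - (r * zs) \<cdot>\<^sub>v unit_vec n (n - 1)))"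
  shows "0 < zs \<and> zs < \<beta> \<and>
    (\<forall>k>0. field n A b0 k \<beta> r (xs @\<^sub>v vec 1 (\<lambda>_. zs)) = 0\<^sub>v (n + 1) \<and>
           loc_exp_stable (n + 1) (field n A b0 k \<beta> r) (xs @\<^sub>v vec 1 (\<lambda>_. zs)))"
proof -
  note met = assms(2) and hur = assms(3)
  have A: "A \<in> carrier_mat n n" using met unfolding metzler_def by auto
  have n0: "n > 0" using assms(1) by simp
  let ?m = "n - 1"
  have m: "?m < n" using n0 by simp
  obtain p where pp: "\<forall>i<n. p i > 0" and rn: "\<forall>i<n. (\<Sum>l<n. A $$ (i,l) * p l) < 0"
    using metzler_hurwitz_pos[OF met hur n0] by blast
  obtain q where qp: "\<forall>i<n. q i > 0" and rq: "\<forall>i<n. (\<Sum>l<n. transpose_mat A $$ (i,l) * q l) < 0"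
    using metzler_hurwitz_pos[OF metzler_transpose[OF met] hurwitz_transpose[OF hur] n0] by blast
  have cn: "\<forall>j<n. (\<Sum>i<n. q i * A $$ (i,j)) < 0"
  proof (intro allI impI)
    fix j assume j: "j < n"
    have "(\<Sum>i<n. q i * A $$ (i,j)) = (\<Sum>l<n. transpose_mat A $$ (j,l) * q l)"
      using A j by (intro sum.cong) auto
    thus "(\<Sum>i<n. q i * A $$ (i,j)) < 0" using rq j by simp
  qed
  define P where "P i = q i / p i" for i
  have Pp: "P i > 0" if "i < n" for i using pp qp that unfolding P_def by auto
  have offA: "\<forall>i<n. \<forall>j<n. i \<noteq> j \<longrightarrow> A $$ (i,j) \<ge> 0" using met unfolding metzler_def by auto
  have lyapA: "(\<Sum>i<n. u $ i * P i * (A *\<^sub>v u) $ i) < 0" if u: "u \<in> carrier_vec n" "u \<noteq> 0\<^sub>v n" for u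
  proof -
    have nz: "\<exists>i<n. complex_of_real (u $ i) \<noteq> 0"
    proof (rule ccontr)
      assume "\<not> ?thesis"
      hence "u = 0\<^sub>v n" using u(1) by (intro eq_vecI) auto
      thus False using u(2) by simp
    qed
    have "Re (\<Sum>i<n. \<Sum>j<n. cnj (complex_of_real (u $ i)) * of_real (q i / p i * A $$ (i,j)) * complex_of_real (u $ j)) < 0"
      by (rule lyap[OF offA pp qp rn cn nz])
    thus ?thesis unfolding quad_real[OF A u(1), of "\<lambda>i. q i / p i"] P_def by simp
  qed
  have detA: "det A \<noteq> 0"
  proof
    assume "det A = 0"
    then obtain v where v: "v \<in> carrier_vec n" "v \<noteq> 0\<^sub>v n" "A *\<^sub>v v = 0\<^sub>v n"
      using det_0_iff_vec_prod_zero_field[OF A] by blast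
    have "(\<Sum>i<n. v $ i * P i * (A *\<^sub>v v) $ i) = 0" using v(3) by simp
    thus False using lyapA[OF v(1,2)] by simp
  qed
  obtain B where B: "B \<in> carrier_mat n n" "B * A = 1\<^sub>m n" "A * B = 1\<^sub>m n"
    using det_non_zero_imp_unit[OF A detA, of "()"] unfolding Units_def ring_mat_def by auto
  define Bm where "Bm = minv n A"
  have "\<exists>B. B \<in> carrier_mat n n \<and> A * B = 1\<^sub>m n \<and> B * A = 1\<^sub>m n" using B by blast
  hence Bm: "Bm \<in> carrier_mat n n" "A * Bm = 1\<^sub>m n" "Bm * A = 1\<^sub>m n"
    unfolding Bm_def minv_def by (metis (mono_tags, lifting) someI_ex)+
  define e :: "real vec" where "e = unit_vec n ?m"
  have e: "e \<in> carrier_vec n" unfolding e_def by simp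
  define u where "u = Bm *\<^sub>v e"
  have u: "u \<in> carrier_vec n" unfolding u_def using Bm e by simp
  have Au: "A *\<^sub>v u = e" unfolding u_def
    using assoc_mult_mat_vec[OF A Bm(1) e, symmetric] Bm(2) e by simp
  have unz: "u \<noteq> 0\<^sub>v n"
  proof
    assume "u = 0\<^sub>v n"
    moreover have "A *\<^sub>v 0\<^sub>v n = (0\<^sub>v n :: real vec)" using A by (intro eq_vecI) (auto simp: scalar_prod_def)
    ultimately have "e = 0\<^sub>v n" using Au by simp
    hence "e $ ?m = 0" using m by simp
    thus False unfolding e_def using m by simp
  qed
  have "(\<Sum>i<n. u $ i * P i * (A *\<^sub>v u) $ i) = u $ ?m * P ?m"
    unfolding Au e_def using m by (simp add: if_distrib cong: if_cong)
  hence "u $ ?m * P ?m < 0" using lyapA[OF u unz] by simp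
  hence um: "u $ ?m < 0" using Pp[OF m] by (simp add: mult_less_0_iff)
  have gn: "gn = - u $ ?m" unfolding assms(8) u_def e_def Bm_def by simp
  have gn0: "gn > 0" using gn um by simp
  note g0 = assms(7) and rlo = assms(9) and rhi = assms(10) and be = assms(6)
  have bg: "1 + \<beta> * gn > 1" using be gn0 by simp
  have g00: "g0 > 0"
  proof (rule ccontr)
    assume "\<not> g0 > 0"
    hence g: "g0 \<le> 0" by simp
    have "g0 * (\<beta> * gn) \<le> 0" using g be gn0 by (simp add: mult_nonpos_nonneg)
    hence "g0 * (1 + \<beta> * gn) \<le> g0" by (simp add: algebra_simps)
    hence "g0 \<le> g0 / (1 + \<beta> * gn)" using bg by (simp add: le_divide_eq)
    thus False using rlo rhi by simp
  qed
  have "g0 / (1 + \<beta> * gn) > 0" using g00 bg by simp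
  hence r0: "r > 0" using rlo by linarith
  have zsdef: "zs = (g0 - r) / (gn * r)" by (rule assms(11))
  have zs0: "0 < zs" unfolding zsdef using rhi r0 gn0 by simp
  have "g0 < r * (1 + \<beta> * gn)" using rlo bg by (simp add: divide_less_eq)
  hence "g0 - r < \<beta> * (gn * r)" by (simp add: algebra_simps)
  hence zsb: "zs < \<beta>" unfolding zsdef using r0 gn0 by (simp add: divide_less_eq)
  have rzg: "r * zs * gn = g0 - r" unfolding zsdef using r0 gn0 by simp
  define y where "y = b0 - (r * zs) \<cdot>\<^sub>v e"
  have y: "y \<in> carrier_vec n" unfolding y_def using assms(4) e by simp
  define z where "z = Bm *\<^sub>v y"
  have z: "z \<in> carrier_vec n" unfolding z_def using Bm y by simp
  have xsz: "xs = - z" unfolding assms(12) z_def y_def e_def Bm_def ..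
  have xs: "xs \<in> carrier_vec n" using xsz z by simp
  have Az: "A *\<^sub>v z = y" unfolding z_def
    using assoc_mult_mat_vec[OF A Bm(1) y, symmetric] Bm(2) y by simp
  have Axs: "(\<Sum>l<n. A $$ (i,l) * xs $ l) = - y $ i" if i: "i < n" for i
  proof -
    have "(\<Sum>l<n. A $$ (i,l) * xs $ l) = - (\<Sum>l<n. A $$ (i,l) * z $ l)"
      unfolding xsz using z by (simp add: sum_negf[symmetric])
    also have "(\<Sum>l<n. A $$ (i,l) * z $ l) = (A *\<^sub>v z) $ i"
      using A z i by (auto simp: scalar_prod_def lessThan_atLeast0 intro!: sum.cong)
    finally show ?thesis unfolding Az .
  qed
  have zm: "z $ ?m = (Bm *\<^sub>v b0) $ ?m - (r * zs) * u $ ?m"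
  proof -
    have "z $ ?m = (\<Sum>j<n. Bm $$ (?m,j) * (b0 $ j - (r * zs) * e $ j))"
      unfolding z_def y_def using Bm(1) m assms(4) e by (auto simp: scalar_prod_def lessThan_atLeast0 intro!: sum.cong)
    also have "\<dots> = (\<Sum>j<n. Bm $$ (?m,j) * b0 $ j) - (r * zs) * (\<Sum>j<n. Bm $$ (?m,j) * e $ j)"
      by (simp add: sum_subtractf sum_distrib_left algebra_simps)
    also have "(\<Sum>j<n. Bm $$ (?m,j) * b0 $ j) = (Bm *\<^sub>v b0) $ ?m"
      using Bm(1) m assms(4) by (auto simp: scalar_prod_def lessThan_atLeast0 intro!: sum.cong)
    also have "(\<Sum>j<n. Bm $$ (?m,j) * e $ j) = u $ ?m"
      unfolding u_def using Bm(1) m e by (auto simp: scalar_prod_def lessThan_atLeast0 intro!: sum.cong)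
    finally show ?thesis .
  qed
  have g0': "g0 = - (Bm *\<^sub>v b0) $ ?m" unfolding g0 Bm_def ..
  have xsm: "xs $ ?m = r"
  proof -
    have "xs $ ?m = - z $ ?m" unfolding xsz using z m by simp
    also have "\<dots> = g0 - r * zs * gn" unfolding zm g0' gn by simp
    finally show ?thesis using rzg by simp
  qed
  define w where "w = xs @\<^sub>v vec 1 (\<lambda>_. zs)"
  have dw: "dim_vec w = Suc n" unfolding w_def using xs by simp
  have wc: "w \<in> carrier_vec (Suc n)" by (rule carrier_vecI[OF dw])
  have wl: "w $ l = xs $ l" if "l < n" for l unfolding w_def using xs that by (simp add: index_append_vec)
  have wn: "w $ n = zs" unfolding w_def using xs by (simp add: index_append_vec)
  have wm: "w $ ?m = r" using wl[OF m] xsm by simp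
  have n1: "n + 1 = Suc n" by simp
  show ?thesis unfolding w_def[symmetric] n1
  proof (intro conjI zs0 zsb allI impI)
    fix k :: real assume k: "k > 0"
    show "field n A b0 k \<beta> r w = 0\<^sub>v (Suc n)"
    proof (rule eq_vecI)
      show "dim_vec (field n A b0 k \<beta> r w) = dim_vec (0\<^sub>v (Suc n) :: real vec)"
        using field_eval(1)[OF A assms(4) n0 wc] by simp
      fix i assume "i < dim_vec (0\<^sub>v (Suc n) :: real vec)"
      hence i: "i < Suc n" by simp
      show "field n A b0 k \<beta> r w $ i = 0\<^sub>v (Suc n) $ i"
      proof (cases "i < n")
        case True
        have "(\<Sum>l<n. A $$ (i,l) * w $ l) = (\<Sum>l<n. A $$ (i,l) * xs $ l)" using wl by simp
        also have "\<dots> = - y $ i" using Axs[OF True] .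
        also have "\<dots> = - b0 $ i + (if i = ?m then r * zs else 0)"
          unfolding y_def e_def using True assms(4) by simp
        finally show ?thesis unfolding field_eval(2)[OF A assms(4) n0 wc True] wm wn using True by simp
      next
        case False
        hence "i = n" using i by simp
        thus ?thesis using field_eval(3)[OF A assms(4) n0 wc, of k \<beta> r] wm by simp
      qed
    qed
    have ka: "k / \<beta> * zs * (\<beta> - zs) > 0" using k be zs0 zsb by simp
    show "loc_exp_stable (Suc n) (field n A b0 k \<beta> r) w"
      unfolding loc_exp_stable_def w_def jac_eq[OF A assms(4) n0 xs xsm]
      by (rule jac_hurwitz[OF met n0 pp qp rn cn _ r0 ka]) (use zs0 in simp)
  qed
qed


end
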